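(* Let $a\in\mathbb{Q}\setminus\{-1,0,1\}$, $z\in\mathbb{C}$ with $|z|\le1$, and $\xi<x$ positive real numbers. Then \begin{multline*} \sum_{\substack{p\le x \\ \nu_p(a)=0}} z^{\omega(p-1) - \omega(\mathrm{ord}_p(a))} = \sum_{\ell\mid Q_\xi} (z-1)^{\omega(\ell)}\sum_{m\mid \ell}\mu(m)\, \#\bigl\{ p\le x : \nu_p(a)=0,\ \ell\mid (p-1)/\mathrm{ord}_p(a),\ m\ell\mid (p-1)\bigr\}\\ + O\biggl( \sum_{\xi<q^k\le x} \#\bigl\{ p\le x : \nu_p(a)=0,\ q^k \mid (p-1)/\mathrm{ord}_p(a),\ q^k\,\|\, (p-1) \bigr\} \biggr), \end{multline*} with an absolute implied constant, where the error sum is over prime powers $q^k$ ($k\ge1$) in $(\xi,x]$.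
   Context: $p,q$ denote primes. $\nu_p(a)$ is the $p$-adic valuation of $a$; $\mathrm{ord}_p(a)$ is the multiplicative order of $a$ mod $p$; $\omega(n)$ is the number of distinct prime factors; $\mu$ is the Möbius function; $q^k\| n$ means $q^k\mid n$ and $q^{k+1}\nmid n$. For $\xi>0$, $Q_\xi$ is the least common multiple of all positive integers $\le\xi$. The convention $0^0=1$ is used. *)

theory Defs
  imports "HOL-Analysis.Analysis" "HOL-Number_Theory.Number_Theory" "HOL-Computational_Algebra.Squarefree"
begin

definition rat_vp :: "nat \<Rightarrow> rat \<Rightarrow> int" where
  "rat_vp p a = (case quotient_of a of (n, d) \<Rightarrow>
      int (multiplicity (int p) n) - int (multiplicity (int p) d))"

text \<open>Multiplicative order of a = n/d modulo p (for p not dividing n d):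
  least k > 0 with (n/d)^k = 1 mod p, i.e. n^k = d^k mod p.\<close>
definition rat_ord :: "nat \<Rightarrow> rat \<Rightarrow> nat" where
  "rat_ord p a = (case quotient_of a of (n, d) \<Rightarrow>
      (LEAST k. 0 < k \<and> [n ^ k = d ^ k] (mod int p)))"

definition omega :: "nat \<Rightarrow> nat" where
  "omega n = card (prime_factors n)"

definition moebius :: "nat \<Rightarrow> int" where
  "moebius n = (if n = 0 then 0 else if squarefree n then (-1) ^ card (prime_factors n) else 0)"

definition Qxi :: "real \<Rightarrow> nat" where
  "Qxi \<xi> = Lcm {1..nat \<lfloor>\<xi>\<rfloor>}"

end

theory Submission
  imports Defs
begin

lemma sum_pow_card:
  fixes w :: "'a::comm_ring_1"
  assumes "finite A"
  shows "(\<Sum>S\<in>Pow A. w ^ card S) = (1 + w) ^ card A"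
  using assms
proof (induction A rule: finite_induct)
  case empty
  then show ?case by simp
next
  case (insert a A)
  have disj: "Pow A \<inter> insert a ` Pow A = {}" using insert by auto
  have inj: "inj_on (insert a) (Pow A)" using insert
    by (auto simp: inj_on_def)
  have "(\<Sum>S\<in>Pow (insert a A). w ^ card S)
      = (\<Sum>S\<in>Pow A. w ^ card S) + (\<Sum>S\<in>insert a ` Pow A. w ^ card S)"
    unfolding Pow_insert using insert disj by (intro sum.union_disjoint) auto
  also have "(\<Sum>S\<in>insert a ` Pow A. w ^ card S) = (\<Sum>S\<in>Pow A. w ^ card (insert a S))"
    using inj by (simp add: sum.reindex)
  also have "\<dots> = (\<Sum>S\<in>Pow A. w * w ^ card S)"
  proof (rule sum.cong)
    fix S assume "S \<in> Pow A"
    then have "finite S" "a \<notin> S" using insert finite_subset by auto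
    then show "w ^ card (insert a S) = w * w ^ card S" by simp
  qed simp
  finally show ?case using insert by (simp add: sum_distrib_left[symmetric] algebra_simps)
qed

lemma fermat_int:
  assumes "prime p" "\<not> int p dvd n"
  shows "[n ^ (p - 1) = 1] (mod int p)"
proof -
  define m where "m = nat (n mod int p)"
  have p0: "int p > 0" using assms prime_gt_0_nat by auto
  have im: "int m = n mod int p" unfolding m_def using p0 by simp
  have "\<not> p dvd m"
  proof
    assume "p dvd m"
    then have "int p dvd int m" by simp
    then have "int p dvd n" using im by (simp add: dvd_mod_iff)
    then show False using assms by simp
  qed
  then have "[m ^ (p - 1) = 1] (mod p)" using fermat_theorem assms by blast
  then have "[int m ^ (p - 1) = 1] (mod int p)"
    by (metis cong_int_iff of_nat_1 of_nat_power)
  moreover have "[n = int m] (mod int p)" using im by (simp add: cong_def)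
  then have "[n ^ (p - 1) = int m ^ (p - 1)] (mod int p)" by (rule cong_pow)
  ultimately show ?thesis using cong_trans by blast
qed

lemma pf_prod_powers:
  fixes S :: "nat set"
  assumes "finite S" "\<And>q. q \<in> S \<Longrightarrow> prime q" "\<And>q. q \<in> S \<Longrightarrow> e q > 0"
  shows "prime_factors (\<Prod>q\<in>S. q ^ e q) = S"
proof -
  show ?thesis
    unfolding prime_factors_multiplicity
    using assms multiplicity_prod_prime_powers[OF assms(1,2)] by (auto split: if_splits)
qed

lemma pf_empty_iff:
  fixes n :: nat
  assumes "n > 0"
  shows "prime_factors n = {} \<longleftrightarrow> n = 1"
proof
  assume "prime_factors n = {}"
  then show "n = 1" using prime_factor_nat[of n] assms by (auto simp: prime_factors_dvd)
qed simp

lemma moebius_sum: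
  fixes n :: nat assumes "n > 0"
  shows "(\<Sum>d\<in>{d. d dvd n}. moebius d) = (if n = 1 then 1 else 0)"
proof -
  let ?A = "prime_factors n"
  let ?SF = "{d. d dvd n \<and> squarefree d}"
  let ?P = "\<lambda>S. \<Prod>q\<in>S. (q::nat)"
  have fin: "finite {d. d dvd n}" using assms by simp
  have 1: "(\<Sum>d\<in>{d. d dvd n}. moebius d) = (\<Sum>d\<in>?SF. moebius d)"
    by (rule sum.mono_neutral_right) (auto simp: moebius_def fin)
  have facts: "?P S \<noteq> 0 \<and> prime_factors (?P S) = S \<and> ?P S dvd n \<and> squarefree (?P S)"
    if S: "S \<subseteq> ?A" for S
  proof -
    have finS: "finite S" using S finite_subset by blast
    have pr: "\<And>q. q \<in> S \<Longrightarrow> prime q" using S by auto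
    have eq: "?P S = (\<Prod>q\<in>S. q ^ (\<lambda>_. 1) q)" by simp
    have nz: "?P S \<noteq> 0" using pr finS by (metis not_prime_0 prod_zero_iff)
    have m: "multiplicity r (?P S) = (if r \<in> S then 1 else 0)" if "prime r" for r
      using multiplicity_prod_prime_powers[OF finS pr that, of "\<lambda>_. 1"] by simp
    have pf: "prime_factors (?P S) = S" using pf_prod_powers[OF finS pr, of "\<lambda>_. 1"] by simp
    have dv: "?P S dvd n"
    proof (rule multiplicity_le_imp_dvd[OF nz])
      fix r :: nat assume r: "prime r"
      show "multiplicity r (?P S) \<le> multiplicity r n"
      proof (cases "r \<in> S")
        case True
        then have "r dvd n" using S by auto
        then have "multiplicity r n > 0" using assms r
          by (simp add: prime_multiplicity_gt_zero_iff)
        then show ?thesis using m[OF r] by simp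
      qed (use m[OF r] in simp)
    qed
    have sf: "squarefree (?P S)"
      using nz m by (subst squarefree_factorial_semiring''[OF nz]) auto
    show ?thesis using nz pf dv sf by blast
  qed
  have img: "?SF = ?P ` Pow ?A"
  proof
    show "?P ` Pow ?A \<subseteq> ?SF" using facts by auto
    show "?SF \<subseteq> ?P ` Pow ?A"
    proof
      fix d assume d: "d \<in> ?SF"
      then have d0: "d \<noteq> 0" using assms by auto
      have "(\<Prod>p\<in>prime_factors d. p ^ multiplicity p d) = d"
        using prod_prime_factors[OF d0] by simp
      moreover have "\<forall>p\<in>prime_factors d. multiplicity p d = 1"
        using d squarefree_factorial_semiring'[OF d0] by auto
      ultimately have "d = ?P (prime_factors d)" by simp
      moreover have "prime_factors d \<subseteq> ?A" using d assms d0
        by (auto simp: in_prime_factors_iff intro: dvd_trans)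
      ultimately show "d \<in> ?P ` Pow ?A" by blast
    qed
  qed
  have inj: "inj_on ?P (Pow ?A)"
  proof (rule inj_onI)
    fix S T assume "S \<in> Pow ?A" "T \<in> Pow ?A" "?P S = ?P T"
    then show "S = T" using facts[of S] facts[of T] by (metis PowD)
  qed
  have "(\<Sum>d\<in>?SF. moebius d) = (\<Sum>S\<in>Pow ?A. moebius (?P S))"
    unfolding img using inj by (simp add: sum.reindex)
  also have "\<dots> = (\<Sum>S\<in>Pow ?A. (-1) ^ card S)"
    using facts by (intro sum.cong) (auto simp: moebius_def)
  also have "\<dots> = (1 + (-1)) ^ card ?A" by (rule sum_pow_card) simp
  also have "\<dots> = (if n = 1 then 1 else 0)"
  proof -
    have "card ?A = 0 \<longleftrightarrow> n = 1" using pf_empty_iff[OF assms] by (simp add: card_eq_0_iff)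
    then show ?thesis by (simp add: power_0_left)
  qed
  finally show ?thesis using 1 by simp
qed

lemma inner_sum:
  fixes N l :: nat
  assumes "N > 0" "l dvd N"
  shows "(\<Sum>m\<in>{m. m dvd l}. moebius m * of_bool (m * l dvd N)) = of_bool (coprime l (N div l))"
proof -
  have l0: "l > 0" using assms by (auto intro: Nat.gr0I)
  obtain k where k: "N = l * k" using assms by blast
  have k0: "k > 0" using k assms by auto
  have iff: "m * l dvd N \<longleftrightarrow> m dvd N div l" for m
    using l0 k by (simp add: mult.commute)
  have fin: "finite {m. m dvd l}" using l0 by simp
  have e1: "(\<Sum>m\<in>{m. m dvd l}. moebius m * of_bool (m * l dvd N))
        = (\<Sum>m\<in>{m. m dvd l} \<inter> {m. m dvd N div l}. moebius m)"
    using fin by (simp add: iff)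
  have st: "{m. m dvd l} \<inter> {m. m dvd N div l} = {m. m dvd gcd l (N div l)}"
    unfolding set_eq_iff Int_iff mem_Collect_eq by (meson gcd_greatest_iff)
  have gp: "gcd l (N div l) > 0" using l0 by simp
  have e2: "(\<Sum>m\<in>{m. m dvd gcd l (N div l)}. moebius m) = (if gcd l (N div l) = 1 then 1 else 0)"
    by (rule moebius_sum[OF gp])
  show ?thesis unfolding e1 unfolding st e2 coprime_iff_gcd_eq_1 of_bool_def by (rule refl)
qed

lemma coprime_by_primes:
  fixes a b :: nat
  assumes "a \<noteq> 0" "\<And>r. prime r \<Longrightarrow> r dvd a \<Longrightarrow> r dvd b \<Longrightarrow> False"
  shows "coprime a b"
proof (rule ccontr)
  assume "\<not> coprime a b"
  then have "gcd a b \<noteq> 1" unfolding coprime_iff_gcd_eq_1 .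
  then obtain r where r: "prime r" "r dvd gcd a b" using prime_factor_nat[of "gcd a b"] by blast
  have "r dvd a" using r(2) gcd_dvd1 dvd_trans by blast
  moreover have "r dvd b" using r(2) gcd_dvd2 dvd_trans by blast
  ultimately show False using assms(2) r(1) by blast
qed

lemma per_p:
  fixes N d Q :: nat and w :: complex
  assumes N0: "N > 0" and d0: "d > 0" and dd: "d dvd N" and Q0: "Q > 0"
  shows "(\<Sum>l\<in>{l. l dvd Q}. w ^ omega l * (\<Sum>m\<in>{m. m dvd l}. of_int (moebius m) *
            of_bool (l dvd N div d \<and> m * l dvd N)))
       = (1 + w) ^ card {q \<in> prime_factors N. q ^ multiplicity q N dvd N div d \<and> q ^ multiplicity q N dvd Q}"
proof -
  define T where "T = {q \<in> prime_factors N. q ^ multiplicity q N dvd N div d \<and> q ^ multiplicity q N dvd Q}"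
  define g where "g = N div d"
  have g0: "g \<noteq> 0" using N0 d0 dd unfolding g_def by (auto elim: dvdE)
  have gN: "g dvd N" unfolding g_def using dd by (metis dvd_div_mult_self dvd_triv_left)
  define P where "P = (\<lambda>l. l dvd g \<and> coprime l (N div l))"
  have step1: "(\<Sum>m\<in>{m. m dvd l}. of_int (moebius m) * of_bool (l dvd g \<and> m * l dvd N)) = (of_bool (P l) :: complex)"
    if "l dvd Q" for l
  proof (cases "l dvd g")
    case True
    then have lN: "l dvd N" using gN by (rule dvd_trans)
    have "(\<Sum>m\<in>{m. m dvd l}. of_int (moebius m) * of_bool (l dvd g \<and> m * l dvd N))
        = (of_int (\<Sum>m\<in>{m. m dvd l}. moebius m * of_bool (m * l dvd N)) :: complex)"
      using True by (simp add: of_int_sum)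
    also have "\<dots> = of_bool (P l)" using inner_sum[OF N0 lN] True unfolding P_def by simp
    finally show ?thesis .
  qed (simp add: P_def)
  have finQ: "finite {l. l dvd Q}" using Q0 by simp
  have "(\<Sum>l\<in>{l. l dvd Q}. w ^ omega l * (\<Sum>m\<in>{m. m dvd l}. of_int (moebius m) *
            of_bool (l dvd N div d \<and> m * l dvd N)))
      = (\<Sum>l\<in>{l. l dvd Q}. w ^ omega l * of_bool (P l))"
    using step1 unfolding g_def by (intro sum.cong) auto
  also have "\<dots> = (\<Sum>l\<in>{l. l dvd Q} \<inter> {l. P l}. w ^ omega l)"
    using finQ by simp
  finally have eq1: "(\<Sum>l\<in>{l. l dvd Q}. w ^ omega l * (\<Sum>m\<in>{m. m dvd l}. of_int (moebius m) *
            of_bool (l dvd N div d \<and> m * l dvd N))) = (\<Sum>l\<in>{l. l dvd Q} \<inter> {l. P l}. w ^ omega l)" .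
  define h where "h = (\<lambda>S. \<Prod>q\<in>S. q ^ multiplicity q N)"
  have finT: "finite T" unfolding T_def by simp
  have facts: "h S \<noteq> 0 \<and> prime_factors (h S) = S \<and> h S \<in> {l. l dvd Q} \<inter> {l. P l}"
    if S: "S \<subseteq> T" for S
  proof -
    have finS: "finite S" using S finT finite_subset by blast
    have pr: "\<And>q. q \<in> S \<Longrightarrow> prime q" using S unfolding T_def by auto
    have ep: "\<And>q. q \<in> S \<Longrightarrow> multiplicity q N > 0" using S N0 unfolding T_def
      by (auto simp: prime_multiplicity_gt_zero_iff in_prime_factors_iff)
    have nz: "h S \<noteq> 0" unfolding h_def using pr finS by (metis not_prime_0 power_eq_0_iff prod_zero_iff)
    have m: "multiplicity r (h S) = (if r \<in> S then multiplicity r N else 0)" if "prime r" for r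
      unfolding h_def using multiplicity_prod_prime_powers[OF finS pr that] by simp
    have pf: "prime_factors (h S) = S" unfolding h_def using pf_prod_powers[OF finS pr ep] .
    have dvQ: "h S dvd Q"
    proof (rule multiplicity_le_imp_dvd[OF nz])
      fix r :: nat assume r: "prime r"
      show "multiplicity r (h S) \<le> multiplicity r Q"
      proof (cases "r \<in> S")
        case True
        then have "r ^ multiplicity r N dvd Q" using S unfolding T_def by auto
        then have "multiplicity r N \<le> multiplicity r Q"
          using Q0 r by (intro multiplicity_geI) (auto simp: prime_gt_1_nat)
        then show ?thesis using m[OF r] True by simp
      qed (use m[OF r] in simp)
    qed
    have dvg: "h S dvd g"
    proof (rule multiplicity_le_imp_dvd[OF nz])
      fix r :: nat assume r: "prime r"
      show "multiplicity r (h S) \<le> multiplicity r g"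
      proof (cases "r \<in> S")
        case True
        then have "r ^ multiplicity r N dvd g" using S unfolding T_def g_def by auto
        then have "multiplicity r N \<le> multiplicity r g"
          using g0 r by (intro multiplicity_geI) (auto simp: prime_gt_1_nat)
        then show ?thesis using m[OF r] True by simp
      qed (use m[OF r] in simp)
    qed
    have hN: "h S dvd N" using dvg gN by (rule dvd_trans)
    obtain c where c: "N = h S * c" using hN by blast
    have c0: "c \<noteq> 0" using c N0 by auto
    have cdef: "N div h S = c" using c nz by simp
    have cop: "coprime (h S) (N div h S)"
    proof (rule coprime_by_primes[OF nz])
      fix r :: nat assume r: "prime r" "r dvd h S" "r dvd N div h S"
      have rS: "r \<in> S" using pf prime_factorsI[OF nz r(1) r(2)] by simp
      have "multiplicity r (h S * c) = multiplicity r (h S) + multiplicity r c"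
        by (rule prime_elem_multiplicity_mult_distrib) (use r nz c0 in auto)
      then have "multiplicity r c = 0" using m[OF r(1)] rS c by simp
      moreover have "r dvd c" using r(3) cdef by simp
      then have "multiplicity r c > 0" using r(1) c0 by (simp add: prime_multiplicity_gt_zero_iff)
      ultimately show False by simp
    qed
    show ?thesis using nz pf dvQ dvg cop unfolding P_def by auto
  qed
  have img: "{l. l dvd Q} \<inter> {l. P l} = h ` Pow T"
  proof
    show "h ` Pow T \<subseteq> {l. l dvd Q} \<inter> {l. P l}" using facts by auto
    show "{l. l dvd Q} \<inter> {l. P l} \<subseteq> h ` Pow T"
    proof
      fix l assume l: "l \<in> {l. l dvd Q} \<inter> {l. P l}"
      then have l0: "l \<noteq> 0" using Q0 by auto
      have lg: "l dvd g" and cop: "coprime l (N div l)" using l unfolding P_def by auto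
      have lN: "l dvd N" using lg gN by (rule dvd_trans)
      obtain c where c: "N = l * c" using lN by blast
      have c0: "c \<noteq> 0" using c N0 by auto
      have cdef: "N div l = c" using c l0 by simp
      have meq: "multiplicity q l = multiplicity q N" if q: "q \<in> prime_factors l" for q
      proof -
        have qp: "prime q" and ql: "q dvd l" using q by auto
        have "\<not> q dvd c"
        proof
          assume "q dvd c"
          then have "is_unit q" using coprime_common_divisor[OF cop ql] cdef by simp
          then show False using qp by simp
        qed
        then have "multiplicity q c = 0" using qp c0 prime_multiplicity_gt_zero_iff[of q c] by auto
        moreover have "multiplicity q (l * c) = multiplicity q l + multiplicity q c"
          by (rule prime_elem_multiplicity_mult_distrib) (use qp l0 c0 in auto)
        then have "multiplicity q N = multiplicity q l + multiplicity q c" using c by simp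
        ultimately show ?thesis by simp
      qed
      have hl: "h (prime_factors l) = l"
      proof -
        have "h (prime_factors l) = (\<Prod>q\<in>prime_factors l. q ^ multiplicity q l)"
          unfolding h_def using meq by (intro prod.cong) auto
        also have "\<dots> = l" using prod_prime_factors[OF l0] by simp
        finally show ?thesis .
      qed
      have sub: "prime_factors l \<subseteq> T"
      proof
        fix q assume q: "q \<in> prime_factors l"
        have qd: "q ^ multiplicity q N dvd l" using meq[OF q] by (metis multiplicity_dvd)
        have "q \<in> prime_factors N" using q lN N0 by (auto simp: in_prime_factors_iff intro: dvd_trans)
        moreover have "q ^ multiplicity q N dvd Q" using qd l by (auto intro: dvd_trans)
        moreover have "q ^ multiplicity q N dvd N div d" using qd lg unfolding g_def by (auto intro: dvd_trans)
        ultimately show "q \<in> T" unfolding T_def by blast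
      qed
      show "l \<in> h ` Pow T" using hl sub by (metis Pow_iff image_eqI)
    qed
  qed
  have inj: "inj_on h (Pow T)"
  proof (rule inj_onI)
    fix S S' assume "S \<in> Pow T" "S' \<in> Pow T" "h S = h S'"
    then show "S = S'" using facts[of S] facts[of S'] by (metis PowD)
  qed
  have "(\<Sum>l\<in>{l. l dvd Q} \<inter> {l. P l}. w ^ omega l) = (\<Sum>S\<in>Pow T. w ^ omega (h S))"
    unfolding img using inj by (simp add: sum.reindex)
  also have "\<dots> = (\<Sum>S\<in>Pow T. w ^ card S)"
    using facts by (intro sum.cong) (auto simp: omega_def)
  also have "\<dots> = (1 + w) ^ card T" using finT by (rule sum_pow_card)
  finally have fin: "(\<Sum>l\<in>{l. l dvd Q} \<inter> {l. P l}. w ^ omega l) = (1 + w) ^ card T" .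
  show ?thesis using trans[OF eq1 fin] unfolding T_def .
qed


lemma rat_facts:
  assumes a0: "a \<noteq> 0" and pp: "prime p" and vp: "rat_vp p a = 0"
  shows "rat_ord p a > 0 \<and> rat_ord p a dvd p - 1"
proof -
  obtain n d where q: "quotient_of a = (n, d)" by (cases "quotient_of a")
  have d0: "d > 0" using quotient_of_denom_pos[OF q] .
  have cop: "coprime n d" using quotient_of_coprime[OF q] .
  have n0: "n \<noteq> 0" using quotient_of_div[OF q] a0 by auto
  have ip: "prime (int p)" using pp by (simp add: prime_nat_int_transfer)
  have meq: "multiplicity (int p) n = multiplicity (int p) d"
    using vp q unfolding rat_vp_def by simp
  have ndvd: "\<not> int p dvd n"
  proof
    assume h: "int p dvd n"
    then have "multiplicity (int p) n > 0" using ip n0 by (simp add: prime_multiplicity_gt_zero_iff)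
    then have "int p dvd d" using meq ip d0 by (simp add: prime_multiplicity_gt_zero_iff)
    then have "is_unit (int p)" using coprime_common_divisor[OF cop h] by simp
    then show False using ip by simp
  qed
  have ddvd: "\<not> int p dvd d"
  proof
    assume h: "int p dvd d"
    then have "multiplicity (int p) d > 0" using ip d0 by (simp add: prime_multiplicity_gt_zero_iff)
    then have "multiplicity (int p) n > 0" using meq by simp
    then have pn: "int p dvd n" using prime_multiplicity_gt_zero_iff[of "int p" n] ip n0 by simp
    have "is_unit (int p)" using coprime_common_divisor[OF cop pn h] by simp
    then show False using ip by simp
  qed
  define K where "K = {k. 0 < k \<and> [n ^ k = d ^ k] (mod int p)}"
  have ord: "rat_ord p a = (LEAST k. k \<in> K)" unfolding rat_ord_def q K_def by simp
  have p2: "p \<ge> 2" using pp by (simp add: prime_ge_2_nat)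
  have "[n ^ (p - 1) = 1] (mod int p)" using fermat_int[OF pp ndvd] .
  moreover have "[d ^ (p - 1) = 1] (mod int p)" using fermat_int[OF pp ddvd] .
  ultimately have fs: "[n ^ (p - 1) = d ^ (p - 1)] (mod int p)" by (meson cong_sym cong_trans)
  then have pK: "p - 1 \<in> K" unfolding K_def using p2 by simp
  define o' where "o' = rat_ord p a"
  have oK: "o' \<in> K" unfolding o'_def ord by (rule LeastI[of "\<lambda>k. k \<in> K", OF pK])
  then have o0: "o' > 0" and oc: "[n ^ o' = d ^ o'] (mod int p)" unfolding K_def by auto
  define t where "t = (p - 1) div o'"
  define r where "r = (p - 1) mod o'"
  have sdec: "p - 1 = o' * t + r" unfolding t_def r_def by simp
  have "[n ^ (p - 1) = (n ^ o') ^ t * n ^ r] (mod int p)"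
    unfolding sdec power_add power_mult by (rule cong_refl)
  moreover have "[(n ^ o') ^ t * n ^ r = (d ^ o') ^ t * n ^ r] (mod int p)"
    by (intro cong_mult cong_pow oc cong_refl)
  ultimately have c1: "[n ^ (p - 1) = (d ^ o') ^ t * n ^ r] (mod int p)" by (rule cong_trans)
  have c2: "[d ^ (p - 1) = (d ^ o') ^ t * d ^ r] (mod int p)"
    unfolding sdec power_add power_mult by (rule cong_refl)
  have "[(d ^ o') ^ t * n ^ r = (d ^ o') ^ t * d ^ r] (mod int p)"
    using c1 c2 fs by (meson cong_sym cong_trans)
  moreover have "coprime ((d ^ o') ^ t) (int p)"
  proof -
    have "coprime (int p) d" using ip ddvd by (simp add: prime_imp_coprime)
    then show ?thesis by (simp add: coprime_commute)
  qed
  ultimately have cr: "[n ^ r = d ^ r] (mod int p)" using cong_mult_lcancel by blast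
  have "r = 0"
  proof (rule ccontr)
    assume "r \<noteq> 0"
    then have "r \<in> K" using cr unfolding K_def by simp
    moreover have "r < o'" unfolding r_def using o0 by simp
    ultimately show False using not_less_Least[of r "\<lambda>k. k \<in> K"] ord o'_def by simp
  qed
  then have "o' dvd p - 1" using sdec by simp
  then show ?thesis using o0 o'_def by simp
qed

lemma Qxi_dvd:
  fixes q k :: nat
  assumes "prime q" "real (q ^ k) \<le> \<xi>"
  shows "q ^ k dvd Qxi \<xi>"
proof -
  have "q > 0" using assms(1) by (simp add: prime_gt_0_nat)
  then have "q ^ k \<ge> 1" by (simp add: Suc_le_eq)
  moreover have "q ^ k \<le> nat \<lfloor>\<xi>\<rfloor>" using assms(2) by (rule le_nat_floor)
  ultimately have "q ^ k \<in> {1..nat \<lfloor>\<xi>\<rfloor>}" by simp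
  then show ?thesis unfolding Qxi_def by (rule dvd_Lcm)
qed

lemma Qxi_pos: "Qxi \<xi> > 0"
proof -
  have "Lcm {1..nat \<lfloor>\<xi>\<rfloor>} \<noteq> (0::nat)"
    using Lcm_0_iff_nat[of "{1..nat \<lfloor>\<xi>\<rfloor>}"] by simp
  then show ?thesis unfolding Qxi_def by (simp only: neq0_conv)
qed


lemma per_p_bound:
  fixes N d Q :: nat and z :: complex and E :: "(nat \<times> nat) set"
  assumes N0: "N > 0" and d0: "d > 0" and dd: "d dvd N" and z1: "cmod z \<le> 1" and finE: "finite E"
    and bad: "\<And>q k. prime q \<Longrightarrow> k \<ge> 1 \<Longrightarrow> \<not> q ^ k dvd Q \<Longrightarrow> q ^ k dvd N \<Longrightarrow> (q, k) \<in> E"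
  shows "cmod (z ^ (omega N - omega d) - z ^ card {q \<in> prime_factors N. q ^ multiplicity q N dvd N div d \<and> q ^ multiplicity q N dvd Q})
     \<le> 2 * (\<Sum>(q, k)\<in>E. of_bool (q ^ k dvd N div d \<and> q ^ k dvd N \<and> \<not> q ^ (k + 1) dvd N))"
proof -
  define T' where "T' = {q \<in> prime_factors N. q ^ multiplicity q N dvd N div d \<and> q ^ multiplicity q N dvd Q}"
  define T where "T = prime_factors N - prime_factors d"
  define g where "g = N div d"
  have Ndg: "N = d * g" unfolding g_def using dd by simp
  have g0: "g \<noteq> 0" using Ndg N0 by auto
  have sub: "prime_factors d \<subseteq> prime_factors N"
    using dd N0 d0 by (auto simp: in_prime_factors_iff intro: dvd_trans)
  have om: "omega N - omega d = card T"
    unfolding omega_def T_def using sub by (simp add: card_Diff_subset)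
  have madd: "multiplicity q N = multiplicity q d + multiplicity q g" if "prime q" for q
  proof -
    have "multiplicity q (d * g) = multiplicity q d + multiplicity q g"
      by (rule prime_elem_multiplicity_mult_distrib) (use that d0 g0 in auto)
    then show ?thesis using Ndg by simp
  qed
  have T'T: "T' \<subseteq> T"
  proof
    fix q assume q: "q \<in> T'"
    then have qN: "q \<in> prime_factors N" and qg: "q ^ multiplicity q N dvd g"
      unfolding T'_def g_def by auto
    have qp: "prime q" using qN by auto
    have "multiplicity q N \<le> multiplicity q g"
      using qg g0 qp by (intro multiplicity_geI) (auto simp: prime_gt_1_nat)
    then have "multiplicity q d = 0" using madd[OF qp] by simp
    then have "\<not> q dvd d" using prime_multiplicity_gt_zero_iff[of q d] qp d0 by auto
    then show "q \<in> T" using qN unfolding T_def by auto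
  qed
  have nonneg: "0 \<le> (\<Sum>(q, k)\<in>E. (of_bool (q ^ k dvd N div d \<and> q ^ k dvd N \<and> \<not> q ^ (k + 1) dvd N) :: real))"
    by (intro sum_nonneg) (auto split: prod.splits)
  have n2: "cmod (z ^ a - z ^ b) \<le> 2" for a b
  proof -
    have "cmod (z ^ a - z ^ b) \<le> cmod (z ^ a) + cmod (z ^ b)" by (rule norm_triangle_ineq4)
    also have "\<dots> \<le> 1 + 1" using z1 by (intro add_mono) (auto simp: norm_power power_le_one)
    finally show ?thesis by simp
  qed
  show ?thesis
  proof (cases "T' = T")
    case True
    then show ?thesis unfolding om T'_def[symmetric] using nonneg by simp
  next
    case False
    then obtain q where qT: "q \<in> T" and qT': "q \<notin> T'" using T'T by blast
    define k where "k = multiplicity q N"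
    have qN: "q \<in> prime_factors N" and qd: "\<not> q dvd d" using qT unfolding T_def
      using d0 by (auto simp: in_prime_factors_iff)
    have qp: "prime q" using qN by auto
    have k1: "k \<ge> 1" unfolding k_def using qN N0 prime_multiplicity_gt_zero_iff[of q N] qp by auto
    have "multiplicity q d = 0" using qd prime_multiplicity_gt_zero_iff[of q d] qp d0 by auto
    then have kg: "multiplicity q g = k" using madd[OF qp] k_def by simp
    have qkg: "q ^ k dvd g" using multiplicity_dvd[of q g] kg by simp
    have qkN: "q ^ k dvd N" unfolding k_def by (rule multiplicity_dvd)
    have qkQ: "\<not> q ^ k dvd Q" using qT' qN qkg unfolding T'_def k_def g_def by auto
    have qk1: "\<not> q ^ (k + 1) dvd N"
    proof
      assume "q ^ (k + 1) dvd N"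
      then have "k + 1 \<le> multiplicity q N"
        using N0 qp by (intro multiplicity_geI) (auto simp: prime_gt_1_nat)
      then show False unfolding k_def by simp
    qed
    have inE: "(q, k) \<in> E" using bad[OF qp k1 qkQ qkN] .
    have "(1::real) = (case (q, k) of (q, k) \<Rightarrow> of_bool (q ^ k dvd N div d \<and> q ^ k dvd N \<and> \<not> q ^ (k + 1) dvd N))"
      using qkg qkN qk1 unfolding g_def by simp
    also have "\<dots> \<le> (\<Sum>(q, k)\<in>E. of_bool (q ^ k dvd N div d \<and> q ^ k dvd N \<and> \<not> q ^ (k + 1) dvd N))"
      by (rule member_le_sum[OF inE _ finE]) (auto split: prod.splits)
    finally have "1 \<le> (\<Sum>(q, k)\<in>E. (of_bool (q ^ k dvd N div d \<and> q ^ k dvd N \<and> \<not> q ^ (k + 1) dvd N) :: real))" .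
    then show ?thesis using n2 by (smt (verit))
  qed
qed


lemma swap3:
  "(\<Sum>l\<in>A. f l * (\<Sum>m\<in>B l. g l m * (\<Sum>p\<in>P. h l m p))) =
   (\<Sum>p\<in>P. \<Sum>l\<in>A. f l * (\<Sum>m\<in>B l. g l m * h l m p))"
  for f :: "'a \<Rightarrow> 'd::comm_semiring_1"
proof -
  have "(\<Sum>l\<in>A. f l * (\<Sum>m\<in>B l. g l m * (\<Sum>p\<in>P. h l m p)))
      = (\<Sum>l\<in>A. \<Sum>m\<in>B l. \<Sum>p\<in>P. f l * (g l m * h l m p))"
    by (simp add: sum_distrib_left)
  also have "\<dots> = (\<Sum>l\<in>A. \<Sum>p\<in>P. \<Sum>m\<in>B l. f l * (g l m * h l m p))"
    by (rule sum.cong[OF refl], rule sum.swap)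
  also have "\<dots> = (\<Sum>p\<in>P. \<Sum>l\<in>A. \<Sum>m\<in>B l. f l * (g l m * h l m p))"
    by (rule sum.swap)
  also have "\<dots> = (\<Sum>p\<in>P. \<Sum>l\<in>A. f l * (\<Sum>m\<in>B l. g l m * h l m p))"
    by (simp add: sum_distrib_left)
  finally show ?thesis .
qed

theorem proposition2p6:
  "\<exists>C::real. \<forall>(a::rat) (z::complex) (\<xi>::real) (x::real).
     a \<notin> {-1, 0, 1} \<and> cmod z \<le> 1 \<and> 0 < \<xi> \<and> \<xi> < x \<longrightarrow>
     cmod ((\<Sum>p\<in>{p::nat. prime p \<and> real p \<le> x \<and> rat_vp p a = 0}.
               z ^ (omega (p - 1) - omega (rat_ord p a)))
           - (\<Sum>l\<in>{l::nat. l dvd Qxi \<xi>}. (z - 1) ^ omega l *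
               (\<Sum>m\<in>{m::nat. m dvd l}. of_int (moebius m) *
                  of_nat (card {p::nat. prime p \<and> real p \<le> x \<and> rat_vp p a = 0 \<and>
                                 l dvd (p - 1) div rat_ord p a \<and> m * l dvd (p - 1)}))))
     \<le> C * (\<Sum>(q, k)\<in>{(q::nat, k::nat). prime q \<and> 1 \<le> k \<and> \<xi> < real (q ^ k) \<and> real (q ^ k) \<le> x}.
               real (card {p::nat. prime p \<and> real p \<le> x \<and> rat_vp p a = 0 \<and>
                                 q ^ k dvd (p - 1) div rat_ord p a \<and>
                                 q ^ k dvd (p - 1) \<and> \<not> q ^ (k + 1) dvd (p - 1)}))"
proof (rule exI[of _ 2], intro allI impI)
  fix a :: rat and z :: complex and \<xi> x :: real
  assume H: "a \<notin> {-1, 0, 1} \<and> cmod z \<le> 1 \<and> 0 < \<xi> \<and> \<xi> < x"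
  then have a0: "a \<noteq> 0" and z1: "cmod z \<le> 1" and xi0: "0 < \<xi>" and xix: "\<xi> < x" by auto
  define P where "P = {p::nat. prime p \<and> real p \<le> x \<and> rat_vp p a = 0}"
  define E where "E = {(q::nat, k::nat). prime q \<and> 1 \<le> k \<and> \<xi> < real (q ^ k) \<and> real (q ^ k) \<le> x}"
  define Q where "Q = Qxi \<xi>"
  define T' where "T' = (\<lambda>p. {q \<in> prime_factors (p - 1). q ^ multiplicity q (p - 1) dvd (p - 1) div rat_ord p a
                          \<and> q ^ multiplicity q (p - 1) dvd Q})"
  define R where "R = (\<lambda>p q k. q ^ k dvd (p - 1) div rat_ord p a \<and> q ^ k dvd (p - 1) \<and> \<not> q ^ (k + 1) dvd (p - 1))"
  have Q0: "Q > 0" unfolding Q_def by (rule Qxi_pos)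
  have finP: "finite P"
  proof (rule finite_subset)
    show "P \<subseteq> {..nat \<lfloor>x\<rfloor>}" unfolding P_def by (auto intro: le_nat_floor)
  qed simp
  have finE: "finite E"
  proof (rule finite_subset)
    show "E \<subseteq> {..nat \<lfloor>x\<rfloor>} \<times> {..nat \<lfloor>x\<rfloor>}"
    proof
      fix qk assume "qk \<in> E"
      then obtain q k where qk: "qk = (q, k)" and q: "prime q" and k: "1 \<le> k" and le: "real (q ^ k) \<le> x"
        unfolding E_def by auto
      have q2: "q \<ge> 2" using q by (simp add: prime_ge_2_nat)
      have a1: "q ^ k \<le> nat \<lfloor>x\<rfloor>" using le by (rule le_nat_floor)
      have a2: "q \<le> q ^ k" using k q2 by (simp add: self_le_power)
      have a3: "k < 2 ^ k" by (rule less_exp)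
      have a4: "(2::nat) ^ k \<le> q ^ k" using q2 by (simp add: power_mono)
      have "q \<le> nat \<lfloor>x\<rfloor>" "k \<le> nat \<lfloor>x\<rfloor>" using a1 a2 a3 a4 by linarith+
      then show "qk \<in> {..nat \<lfloor>x\<rfloor>} \<times> {..nat \<lfloor>x\<rfloor>}" using qk by auto
    qed
  qed simp
  have pfacts: "p - 1 > 0 \<and> rat_ord p a > 0 \<and> rat_ord p a dvd p - 1" if "p \<in> P" for p
  proof -
    have pp: "prime p" and vp: "rat_vp p a = 0" using that unfolding P_def by auto
    have "p \<ge> 2" using pp by (simp add: prime_ge_2_nat)
    then show ?thesis using rat_facts[OF a0 pp vp] by simp
  qed
  have main: "(\<Sum>l\<in>{l::nat. l dvd Q}. (z - 1) ^ omega l *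
               (\<Sum>m\<in>{m::nat. m dvd l}. of_int (moebius m) *
                  of_nat (card {p::nat. prime p \<and> real p \<le> x \<and> rat_vp p a = 0 \<and>
                                 l dvd (p - 1) div rat_ord p a \<and> m * l dvd (p - 1)})))
      = (\<Sum>p\<in>P. z ^ card (T' p))"
  proof -
    have cardeq: "(of_nat (card {p::nat. prime p \<and> real p \<le> x \<and> rat_vp p a = 0 \<and>
                                 l dvd (p - 1) div rat_ord p a \<and> m * l dvd (p - 1)}) :: complex)
        = (\<Sum>p\<in>P. of_bool (l dvd (p - 1) div rat_ord p a \<and> m * l dvd (p - 1)))" for l m
    proof -
      have "{p::nat. prime p \<and> real p \<le> x \<and> rat_vp p a = 0 \<and>
                                 l dvd (p - 1) div rat_ord p a \<and> m * l dvd (p - 1)}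
            = P \<inter> {p. l dvd (p - 1) div rat_ord p a \<and> m * l dvd (p - 1)}"
        unfolding P_def by auto
      then show ?thesis using finP by simp
    qed
    have "(\<Sum>l\<in>{l::nat. l dvd Q}. (z - 1) ^ omega l *
               (\<Sum>m\<in>{m::nat. m dvd l}. of_int (moebius m) *
                  of_nat (card {p::nat. prime p \<and> real p \<le> x \<and> rat_vp p a = 0 \<and>
                                 l dvd (p - 1) div rat_ord p a \<and> m * l dvd (p - 1)})))
        = (\<Sum>l\<in>{l::nat. l dvd Q}. (z - 1) ^ omega l *
               (\<Sum>m\<in>{m::nat. m dvd l}. of_int (moebius m) *
                  (\<Sum>p\<in>P. of_bool (l dvd (p - 1) div rat_ord p a \<and> m * l dvd (p - 1)))))"
      by (simp only: cardeq)
    also have "\<dots> = (\<Sum>p\<in>P. \<Sum>l\<in>{l::nat. l dvd Q}. (z - 1) ^ omega l *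
               (\<Sum>m\<in>{m::nat. m dvd l}. of_int (moebius m) *
                  of_bool (l dvd (p - 1) div rat_ord p a \<and> m * l dvd (p - 1))))"
      by (rule swap3)
    also have "\<dots> = (\<Sum>p\<in>P. (1 + (z - 1)) ^ card (T' p))"
    proof (rule sum.cong[OF refl])
      fix p assume "p \<in> P"
      then have f: "p - 1 > 0" "rat_ord p a > 0" "rat_ord p a dvd p - 1" using pfacts by auto
      show "(\<Sum>l\<in>{l::nat. l dvd Q}. (z - 1) ^ omega l *
               (\<Sum>m\<in>{m::nat. m dvd l}. of_int (moebius m) *
                  of_bool (l dvd (p - 1) div rat_ord p a \<and> m * l dvd (p - 1))))
            = (1 + (z - 1)) ^ card (T' p)"
        unfolding T'_def by (rule per_p[OF f Q0])
    qed
    also have "\<dots> = (\<Sum>p\<in>P. z ^ card (T' p))" by simp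
    finally show ?thesis .
  qed
  have bound: "cmod (z ^ (omega (p - 1) - omega (rat_ord p a)) - z ^ card (T' p))
       \<le> 2 * (\<Sum>(q, k)\<in>E. of_bool (R p q k))" if pP: "p \<in> P" for p
  proof -
    have f: "p - 1 > 0" "rat_ord p a > 0" "rat_ord p a dvd p - 1" using pfacts[OF pP] by auto
    have px: "real p \<le> x" using pP unfolding P_def by auto
    have bad: "(q, k) \<in> E" if q: "prime q" and k: "k \<ge> 1" and nQ: "\<not> q ^ k dvd Q" and qN: "q ^ k dvd p - 1" for q k
    proof -
      have "\<xi> < real (q ^ k)" using Qxi_dvd[OF q, of k \<xi>] nQ unfolding Q_def by linarith
      moreover have "q ^ k \<le> p - 1" using qN f(1) by (simp add: dvd_imp_le)
      then have "real (q ^ k) \<le> x" using px f(1) by linarith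
      ultimately show ?thesis unfolding E_def using q k by auto
    qed
    show ?thesis unfolding T'_def R_def
      by (rule per_p_bound[OF f z1 finE bad])
  qed
  have "cmod ((\<Sum>p\<in>P. z ^ (omega (p - 1) - omega (rat_ord p a))) - (\<Sum>p\<in>P. z ^ card (T' p)))
      = cmod (\<Sum>p\<in>P. z ^ (omega (p - 1) - omega (rat_ord p a)) - z ^ card (T' p))"
    by (simp add: sum_subtractf)
  also have "\<dots> \<le> (\<Sum>p\<in>P. cmod (z ^ (omega (p - 1) - omega (rat_ord p a)) - z ^ card (T' p)))"
    by (rule norm_sum)
  also have "\<dots> \<le> (\<Sum>p\<in>P. 2 * (\<Sum>(q, k)\<in>E. of_bool (R p q k)))"
    by (rule sum_mono) (rule bound)
  also have "\<dots> = 2 * (\<Sum>(q, k)\<in>E. \<Sum>p\<in>P. (of_bool (R p q k) :: real))"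
    by (simp add: sum_distrib_left[symmetric] sum.swap[of _ E P] case_prod_beta)
  also have "\<dots> = 2 * (\<Sum>(q, k)\<in>E. real (card {p::nat. prime p \<and> real p \<le> x \<and> rat_vp p a = 0 \<and>
                                 q ^ k dvd (p - 1) div rat_ord p a \<and>
                                 q ^ k dvd (p - 1) \<and> \<not> q ^ (k + 1) dvd (p - 1)}))"
  proof -
    have "(\<Sum>p\<in>P. (of_bool (R p q k) :: real)) = real (card {p::nat. prime p \<and> real p \<le> x \<and> rat_vp p a = 0 \<and>
                                 q ^ k dvd (p - 1) div rat_ord p a \<and>
                                 q ^ k dvd (p - 1) \<and> \<not> q ^ (k + 1) dvd (p - 1)})" for q k
    proof -
      have "{p::nat. prime p \<and> real p \<le> x \<and> rat_vp p a = 0 \<and>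
                                 q ^ k dvd (p - 1) div rat_ord p a \<and>
                                 q ^ k dvd (p - 1) \<and> \<not> q ^ (k + 1) dvd (p - 1)} = P \<inter> {p. R p q k}"
        unfolding P_def R_def by auto
      then show ?thesis using finP by simp
    qed
    then show ?thesis by (simp add: case_prod_beta)
  qed
  finally show "cmod ((\<Sum>p\<in>{p::nat. prime p \<and> real p \<le> x \<and> rat_vp p a = 0}.
               z ^ (omega (p - 1) - omega (rat_ord p a)))
           - (\<Sum>l\<in>{l::nat. l dvd Qxi \<xi>}. (z - 1) ^ omega l *
               (\<Sum>m\<in>{m::nat. m dvd l}. of_int (moebius m) *
                  of_nat (card {p::nat. prime p \<and> real p \<le> x \<and> rat_vp p a = 0 \<and>
                                 l dvd (p - 1) div rat_ord p a \<and> m * l dvd (p - 1)}))))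
     \<le> 2 * (\<Sum>(q, k)\<in>{(q::nat, k::nat). prime q \<and> 1 \<le> k \<and> \<xi> < real (q ^ k) \<and> real (q ^ k) \<le> x}.
               real (card {p::nat. prime p \<and> real p \<le> x \<and> rat_vp p a = 0 \<and>
                                 q ^ k dvd (p - 1) div rat_ord p a \<and>
                                 q ^ k dvd (p - 1) \<and> \<not> q ^ (k + 1) dvd (p - 1)}))"
    unfolding main[unfolded Q_def] P_def[symmetric] E_def[symmetric] .
qed


end
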